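(* Let $n\ge1$ and let $\tau$ be real with $\tau<\frac{1}{n-1}$ (no upper restriction when $n=1$). Then every $\omega\in\Omega_n(\tau)$ is non-resonant, i.e. $\langle k,\omega\rangle\notin\mathbb{Z}$ for all $k\in\mathbb{Z}^n\setminus\{0\}$. Here $\Omega_n(\tau)$ is the set of $\omega\in\mathbb{R}^n$ for which there exists $C>0$ such that $\|T\omega\|_{\mathbb{Z}}\ge C\,T^{-(1+\tau)/n}$ for every integer $T\ge1$.
   Context: For $\omega\in\mathbb{R}^n$, $|\omega|=\max_i|\omega_i|$ and $\|\omega\|_{\mathbb{Z}}=\min_{k\in\mathbb{Z}^n}|\omega-k|$. *)

theory Defs
  imports "HOL-Analysis.Analysis"
begin

definition maxnorm :: "real^'n \<Rightarrow> real" where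
  "maxnorm w = Max (range (\<lambda>i. \<bar>w $ i\<bar>))"

definition int_vec :: "real^'n \<Rightarrow> bool" where
  "int_vec k \<longleftrightarrow> (\<forall>i. k $ i \<in> \<int>)"

text \<open>||w||_Z = min over integer vectors k of |w - k| (the minimum is attained; Inf).\<close>
definition znorm :: "real^'n \<Rightarrow> real" where
  "znorm w = Inf {maxnorm (w - k) | k. int_vec k}"

definition Omega :: "real \<Rightarrow> (real^'n) set" where
  "Omega \<tau> = {\<omega>. \<exists>C>0. \<forall>T::nat. T \<ge> 1 \<longrightarrow>
      znorm (real T *\<^sub>R \<omega>) \<ge> C * real T powr (-(1 + \<tau>) / real CARD('n))}"

definition non_resonant :: "real^'n \<Rightarrow> bool" where
  "non_resonant \<omega> \<longleftrightarrow> (\<forall>k. int_vec k \<and> k \<noteq> 0 \<longrightarrow> k \<bullet> \<omega> \<notin> \<int>)"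

end

theory Submission
  imports Defs
begin

lemma maxnorm_le:
  fixes w :: "real^'n"
  assumes "\<And>i. \<bar>w $ i\<bar> \<le> b"
  shows "maxnorm w \<le> b"
  unfolding maxnorm_def using assms by (subst Max_le_iff) auto

lemma maxnorm_nonneg: "0 \<le> maxnorm (w::real^'n)"
  unfolding maxnorm_def by (rule order_trans[OF abs_ge_zero Max_ge]) auto

lemma znorm_le:
  fixes x v :: "real^'n"
  assumes "int_vec v"
  shows "znorm x \<le> maxnorm (x - v)"
  unfolding znorm_def
  by (rule cInf_lower) (use assms maxnorm_nonneg in \<open>auto intro!: bdd_belowI\<close>)

lemma approx_step:
  fixes \<omega> :: "real^'n" and K :: "'n \<Rightarrow> int" and m :: int
  assumes sumeq: "(\<Sum>i\<in>UNIV. real_of_int (K i) * \<omega> $ i) = real_of_int m"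
    and j0: "K j0 \<noteq> 0" and Q: "Q \<ge> (1::nat)"
  shows "\<exists>T::nat. T \<ge> 1 \<and> real T \<le> real_of_int \<bar>K j0\<bar> * real Q ^ (CARD('n) - 1)
     \<and> znorm (real T *\<^sub>R \<omega>) \<le> (\<Sum>i\<in>UNIV. real_of_int \<bar>K i\<bar>) / real Q"
proof -
  define A where "A = UNIV - {j0}"
  have cA: "card A = CARD('n) - 1" unfolding A_def by (simp add: card_Diff_singleton)
  obtain h where h: "bij_betw h {0..<CARD('n) - 1} A"
    using ex_bij_betw_nat_finite[of A] cA by auto
  obtain q p where q0: "0 < q" and qle: "q \<le> int (Q ^ (CARD('n) - 1))"
    and qp: "\<And>l. l < CARD('n) - 1 \<Longrightarrow> \<bar>real_of_int q * \<omega> $ (h l) - real_of_int (p l)\<bar> < 1 / real Q"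
    using Dirichlet_approx_simult[where \<theta>="\<lambda>l. \<omega> $ (h l)" and N=Q and n="CARD('n) - 1"] Q by (metis less_le_trans zero_less_one)
  define P where "P i = p (inv_into {0..<CARD('n) - 1} h i)" for i
  have Pb: "\<bar>real_of_int q * \<omega> $ i - real_of_int (P i)\<bar> \<le> 1 / real Q" if "i \<noteq> j0" for i
  proof -
    have iA: "i \<in> A" using that A_def by auto
    let ?l = "inv_into {0..<CARD('n) - 1} h i"
    have "?l \<in> {0..<CARD('n) - 1}" "h ?l = i"
      using h iA by (auto simp: bij_betw_def inv_into_into f_inv_into_f)
    then show ?thesis using qp[of ?l] unfolding P_def by auto
  qed
  define a where "a = \<bar>K j0\<bar>"
  define \<sigma> where "\<sigma> = sgn (K j0)"
  have a1: "a \<ge> 1" using j0 a_def by auto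
  have aK: "real_of_int a = real_of_int \<sigma> * real_of_int (K j0)"
    unfolding a_def \<sigma>_def by (simp add: abs_sgn)
  have \<sigma>abs: "\<bar>real_of_int \<sigma>\<bar> = 1" using j0 unfolding \<sigma>_def by (auto simp: sgn_if)
  define S where "S = (\<Sum>i\<in>UNIV. real_of_int \<bar>K i\<bar>)"
  define SA where "SA = (\<Sum>i\<in>A. real_of_int \<bar>K i\<bar>)"
  have Ssplit: "S = real_of_int a + SA"
    unfolding S_def SA_def A_def a_def by (simp add: sum.remove[of UNIV j0])
  have SA0: "SA \<ge> 0" unfolding SA_def by (simp add: sum_nonneg)
  have Qpos: "real Q > 0" using Q by auto
  define T where "T = nat (a * q)"
  have Treal: "real T = real_of_int a * real_of_int q"
    unfolding T_def using a1 q0 by simp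
  have "a * 1 \<le> a * q" by (rule mult_left_mono) (use q0 a1 in auto)
  then have aq1: "1 \<le> a * q" using a1 by linarith
  have T1: "T \<ge> 1" unfolding T_def using aq1 by linarith
  define r where "r = \<sigma> * (q * m - (\<Sum>i\<in>A. K i * P i))"
  define v :: "real^'n" where "v = (\<chi> i. if i = j0 then real_of_int r else real_of_int (a * P i))"
  have iv: "int_vec v" unfolding int_vec_def v_def by auto
  have bnd: "\<bar>(real T *\<^sub>R \<omega> - v) $ i\<bar> \<le> S / real Q" for i
  proof (cases "i = j0")
    case False
    have "(real T *\<^sub>R \<omega> - v) $ i = real_of_int a * (real_of_int q * \<omega> $ i - real_of_int (P i))"
      using False by (simp add: v_def Treal algebra_simps)
    then have "\<bar>(real T *\<^sub>R \<omega> - v) $ i\<bar> = real_of_int a * \<bar>real_of_int q * \<omega> $ i - real_of_int (P i)\<bar>"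
      using a1 by (simp add: abs_mult)
    also have "\<dots> \<le> real_of_int a * (1 / real Q)"
      using Pb[OF False] a1 by (intro mult_left_mono) auto
    also have "\<dots> \<le> S / real Q" using Ssplit SA0 Qpos by (simp add: divide_right_mono)
    finally show ?thesis .
  next
    case True
    have m: "real_of_int m = real_of_int (K j0) * \<omega> $ j0 + (\<Sum>i\<in>A. real_of_int (K i) * \<omega> $ i)"
      using sumeq unfolding A_def by (simp add: sum.remove[of UNIV j0])
    define X where "X = (\<Sum>i\<in>A. real_of_int (K i) * real_of_int (P i))"
    define Y where "Y = (\<Sum>i\<in>A. real_of_int (K i) * \<omega> $ i)"
    have e1: "(real T *\<^sub>R \<omega> - v) $ i = real_of_int a * real_of_int q * \<omega> $ j0 - real_of_int \<sigma> * (real_of_int q * real_of_int m - X)"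
      using True unfolding v_def r_def X_def by (simp add: Treal)
    have e2: "(\<Sum>i\<in>A. real_of_int (K i) * (real_of_int (P i) - real_of_int q * \<omega> $ i)) = X - real_of_int q * Y"
      unfolding X_def Y_def by (simp add: sum_subtractf sum_distrib_left right_diff_distrib mult.left_commute)
    have m': "real_of_int m = real_of_int (K j0) * \<omega> $ j0 + Y" using m Y_def by simp
    have "(real T *\<^sub>R \<omega> - v) $ i = real_of_int \<sigma> * (\<Sum>i\<in>A. real_of_int (K i) * (real_of_int (P i) - real_of_int q * \<omega> $ i))"
      unfolding e1 e2 aK m' by algebra
    also have "\<bar>\<dots>\<bar> = \<bar>\<Sum>i\<in>A. real_of_int (K i) * (real_of_int (P i) - real_of_int q * \<omega> $ i)\<bar>"
      using \<sigma>abs by (simp add: abs_mult)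
    also have "\<dots> \<le> (\<Sum>i\<in>A. \<bar>real_of_int (K i) * (real_of_int (P i) - real_of_int q * \<omega> $ i)\<bar>)"
      by (rule sum_abs)
    also have "\<dots> \<le> (\<Sum>i\<in>A. real_of_int \<bar>K i\<bar> * (1 / real Q))"
    proof (rule sum_mono)
      fix i assume "i \<in> A"
      then have "i \<noteq> j0" by (simp add: A_def)
      from Pb[OF this] show "\<bar>real_of_int (K i) * (real_of_int (P i) - real_of_int q * \<omega> $ i)\<bar> \<le> real_of_int \<bar>K i\<bar> * (1 / real Q)"
        unfolding abs_mult abs_minus_commute[of "real_of_int (P i)"] of_int_abs[symmetric] by (rule mult_left_mono) auto
    qed
    also have "\<dots> = SA / real Q" unfolding SA_def by (simp add: sum_divide_distrib)
    also have "\<dots> \<le> S / real Q" using Ssplit a1 Qpos by (simp add: divide_right_mono)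
    finally show ?thesis .
  qed
  have "znorm (real T *\<^sub>R \<omega>) \<le> S / real Q"
    using znorm_le[OF iv, of "real T *\<^sub>R \<omega>"] maxnorm_le[of _ "S / real Q", OF bnd] by linarith
  moreover have "real T \<le> real_of_int a * real Q ^ (CARD('n) - 1)"
  proof -
    have "real_of_int q \<le> real_of_int (int (Q ^ (CARD('n) - 1)))" using qle
      by (simp only: of_int_le_iff)
    then have "real_of_int q \<le> real (Q ^ (CARD('n) - 1))" by (simp only: of_int_of_nat_eq)
    then have qQ: "real_of_int q \<le> real Q ^ (CARD('n) - 1)" by (simp only: of_nat_power)
    have "real_of_int a * real_of_int q \<le> real_of_int a * real Q ^ (CARD('n) - 1)"
      by (rule mult_left_mono[OF qQ]) (use a1 in simp)
    then show ?thesis by (simp only: Treal)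
  qed
  ultimately show ?thesis using T1 unfolding S_def a_def by auto
qed


lemma large_Q:
  fixes d B :: real
  assumes "d > 0" and "\<And>Q::nat. Q \<ge> 1 \<Longrightarrow> real Q powr d \<le> B"
  shows False
proof -
  define M where "M = max B 1"
  define Q where "Q = nat \<lceil>M powr (1/d)\<rceil> + 1"
  have M0: "M > 0" unfolding M_def by simp
  have Q1: "Q \<ge> 1" unfolding Q_def by simp
  have lt: "M powr (1/d) < real Q" unfolding Q_def by linarith
  have "(M powr (1/d)) powr d < real Q powr d"
    by (rule powr_less_mono2) (use assms(1) lt in auto)
  moreover have "(M powr (1/d)) powr d = M" using M0 assms(1) by (simp add: powr_powr)
  ultimately have "M < real Q powr d" by simp
  with assms(2)[OF Q1] show False unfolding M_def by linarith
qed

theorem mainTheorem5: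
  fixes \<omega> :: "real^'n" and \<tau> :: real
  assumes "CARD('n) = 1 \<or> \<tau> < 1 / (real CARD('n) - 1)"
    and "\<omega> \<in> Omega \<tau>"
  shows "non_resonant \<omega>"
proof (rule ccontr)
  assume "\<not> non_resonant \<omega>"
  then obtain k where kint: "int_vec k" "k \<noteq> 0" "k \<bullet> \<omega> \<in> \<int>"
    unfolding non_resonant_def by blast
  obtain m where m: "k \<bullet> \<omega> = of_int m" using kint(3) Ints_cases by metis
  have "\<forall>i. \<exists>z::int. k $ i = of_int z" using kint(1) unfolding int_vec_def by (metis Ints_cases)
  then obtain K where K: "\<And>i. k $ i = of_int (K i)" by metis
  obtain j0 where "k $ j0 \<noteq> 0" using kint(2) by (metis vec_eq_iff zero_index)
  hence j0: "K j0 \<noteq> 0" using K by auto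
  have sumeq: "(\<Sum>i\<in>UNIV. real_of_int (K i) * \<omega> $ i) = real_of_int m"
    using m by (simp add: inner_vec_def K)
  obtain C where C0: "C > 0" and C: "\<And>T::nat. T \<ge> 1 \<Longrightarrow>
      znorm (real T *\<^sub>R \<omega>) \<ge> C * real T powr (-(1 + \<tau>) / real CARD('n))"
    using assms(2) unfolding Omega_def by blast
  define n where "n = real CARD('n)"
  define e where "e = (1 + \<tau>) / n"
  define a where "a = real_of_int \<bar>K j0\<bar>"
  define S where "S = (\<Sum>i\<in>UNIV. real_of_int \<bar>K i\<bar>)"
  have n1: "n \<ge> 1" unfolding n_def by simp
  have a1: "a \<ge> 1" unfolding a_def using j0 by linarith
  have ne: "(n - 1) * e < 1"
  proof (cases "CARD('n) = 1")
    case True then show ?thesis unfolding n_def by simp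
  next
    case False
    have c1: "0 < CARD('n)" by simp
    have "CARD('n) \<ge> 2" using False c1 by linarith
    then have n2: "n - 1 > 0" unfolding n_def by simp
    with False assms(1) have "\<tau> < 1 / (n - 1)" unfolding n_def by simp
    then have "(n - 1) * \<tau> < 1" using n2 by (simp add: field_simps)
    then have "(n - 1) * (1 + \<tau>) < n" by (simp add: algebra_simps)
    then show ?thesis unfolding e_def using n1 by (simp add: field_simps)
  qed
  have rk: "real (CARD('n) - 1) = n - 1" unfolding n_def by (simp add: of_nat_diff)
  have key: "C * real T powr (- e) \<le> S / real Q" if "Q \<ge> 1" "T \<ge> 1"
      "znorm (real T *\<^sub>R \<omega>) \<le> S / real Q" for Q T :: nat
  proof -
    have "-(1 + \<tau>) / real CARD('n) = - e" unfolding e_def n_def by (simp add: field_simps)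
    then show ?thesis using C[OF that(2)] that(3) by simp
  qed
  show False
  proof (cases "e \<le> 0")
    case True
    have "real Q powr 1 \<le> S / C" if Q: "Q \<ge> 1" for Q :: nat
    proof -
      obtain T where T: "T \<ge> 1" "znorm (real T *\<^sub>R \<omega>) \<le> S / real Q"
        using approx_step[OF sumeq j0 Q] unfolding S_def by blast
      have "1 \<le> real T powr (- e)" using T True by (intro ge_one_powr_ge_zero) auto
      then have "C \<le> S / real Q" using key[OF Q T] C0
        by (meson order_trans mult_le_cancel_left1 less_le_not_le)
      then show ?thesis using Q C0 by (simp add: field_simps)
    qed
    then show False by (intro large_Q[of 1 "S / C"]) auto
  next
    case False
    define d where "d = 1 - (n - 1) * e"
    have d0: "d > 0" using ne d_def by simp
    have "real Q powr d \<le> S / (C * a powr (- e))" if Q: "Q \<ge> 1" for Q :: nat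
    proof -
      obtain T where T: "T \<ge> 1" "real T \<le> a * real Q ^ (CARD('n) - 1)"
          "znorm (real T *\<^sub>R \<omega>) \<le> S / real Q"
        using approx_step[OF sumeq j0 Q] unfolding S_def a_def by blast
      have Qp: "real Q > 0" using Q by simp
      have "(a * real Q ^ (CARD('n) - 1)) powr (- e) \<le> real T powr (- e)"
        by (rule powr_mono2') (use False T in auto)
      also have "(a * real Q ^ (CARD('n) - 1)) powr (- e) = a powr (- e) * real Q powr (- ((n - 1) * e))"
      proof -
        have "real Q ^ (CARD('n) - 1) = real Q powr (n - 1)"
          using Qp rk by (metis powr_realpow)
        then show ?thesis using a1 Qp by (simp add: powr_mult powr_powr)
      qed
      finally have "C * (a powr (- e) * real Q powr (- ((n - 1) * e))) \<le> S / real Q"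
        using key[OF Q T(1) T(3)] C0 by (meson mult_left_mono order_trans less_le)
      then have "C * a powr (- e) * (real Q powr (- ((n - 1) * e)) * real Q) \<le> S"
        using Qp by (simp add: field_simps)
      moreover have "real Q powr (- ((n - 1) * e)) * real Q = real Q powr d"
      proof -
        have "real Q powr d = real Q powr (- ((n - 1) * e) + 1)" unfolding d_def by simp
        also have "\<dots> = real Q powr (- ((n - 1) * e)) * real Q powr 1" by (rule powr_add)
        finally show ?thesis using Qp by simp
      qed
      ultimately have "C * a powr (- e) * real Q powr d \<le> S" by simp
      moreover have "C * a powr (- e) > 0" using C0 a1 by simp
      ultimately show ?thesis by (simp add: field_simps)
    qed
    then show False by (intro large_Q[OF d0]) auto
  qed
qed

end
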